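(* Let $C$ be a commutative ring with identity and $\lambda\in C$. Let $\text{Ш}_C(C)$ denote the shuffle Baxter $C$-algebra of weight $\lambda$ on $C$ (equivalently the free Baxter $C$-algebra of weight $\lambda$ on the empty set), and $\widehat{\text{Ш}}_C(C)$ its completion. \begin{enumerate} \item If $C$ is a noetherian $\mathbb{Q}$-algebra, then $\text{Ш}_C(C)$ is a noetherian ring for every $\lambda\in C$. \item If $C$ is a noetherian $\mathbb{Q}$-algebra and if $\lambda =0$, then $\widehat{\text{Ш}}_C(C)$ is a noetherian ring. \item If $C$ is a $\mathbb{Q}$-algebra, $\lambda\in C$ is not a zero divisor and $\cap_{n\in\mathbb{N}}\lambda^n C \neq 0$, then $\widehat{\text{Ш}}_C(C)$ is not a noetherian ring. \item If $C$ is not a $\mathbb{Q}$-algebra, then $\text{Ш}_C(C)$ and $\widehat{\text{Ш}}_C(C)$ are not noetherian rings. \end{enumerate}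
   Context: All rings are commutative with identity. A Baxter $C$-algebra of weight $\lambda$ is a commutative $C$-algebra $R$ with a $C$-linear operator $P$ satisfying $P(x)P(y)=P(xP(y))+P(yP(x))+\lambda P(xy)$. Here $\text{Ш}_C(C)=\bigoplus_{n\in\mathbb{N}} C\,\mathbf{1}^{\otimes (n+1)}$ and its completion $\widehat{\text{Ш}}_C(C)=\prod_{n\in\mathbb{N}} C\,\mathbf{1}^{\otimes (n+1)}$ (completion with respect to the filtration $\mathrm{Fil}^k=\bigoplus_{n\geq k} C\mathbf{1}^{\otimes(n+1)}$), with multiplication determined by $\mathbf{1}^{\otimes (m+1)} \mathbf{1}^{\otimes (n+1)} = \sum_{k=0}^m \binom{m+n-k}{n}\binom{n}{k} \lambda^k \mathbf{1}^{\otimes (m+n+1-k)}$ for $m,n\in\mathbb{N}$, and Baxter operator $P(\mathbf{1}^{\otimes(n+1)})=\mathbf{1}^{\otimes(n+2)}$. *)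

theory Defs
  imports "HOL-Algebra.Ring_Divisibility"
begin

definition type_ring :: "('a::comm_ring_1) ring" where
  "type_ring = \<lparr>carrier = UNIV, mult = (*), one = 1, zero = 0, add = (+)\<rparr>"

definition is_Q_algebra :: "'a::comm_ring_1 itself \<Rightarrow> bool" where
  "is_Q_algebra _ \<longleftrightarrow> (\<forall>n::nat. n > 0 \<longrightarrow> (of_nat n :: 'a) dvd 1)"

text \<open>Elements of the (completed) shuffle Baxter algebra: a function a with a n the
  coefficient of 1^{\<otimes>(n+1)}. Product from
  1^{\<otimes>(m+1)} 1^{\<otimes>(n+1)} = \<Sum>k=0..m (m+n-k choose n)(n choose k) \<lambda>^k 1^{\<otimes>(m+n+1-k)};
  the coefficient at p collects the terms with m = p - n + k.\<close>
definition sha_mult :: "'a::comm_ring_1 \<Rightarrow> (nat \<Rightarrow> 'a) \<Rightarrow> (nat \<Rightarrow> 'a) \<Rightarrow> (nat \<Rightarrow> 'a)" where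
  "sha_mult lam a b = (\<lambda>p. \<Sum>n\<le>p. \<Sum>k\<le>n.
      of_nat (p choose n) * of_nat (n choose k) * lam ^ k * a (p - n + k) * b n)"

definition sha_one :: "nat \<Rightarrow> 'a::comm_ring_1" where
  "sha_one = (\<lambda>n. if n = 0 then 1 else 0)"

text \<open>Sha_C(C) = direct sum: finitely supported coefficient sequences.\<close>
definition sha_ring :: "'a::comm_ring_1 \<Rightarrow> (nat \<Rightarrow> 'a) ring" where
  "sha_ring lam = \<lparr>carrier = {a. finite {n. a n \<noteq> 0}}, mult = sha_mult lam,
      one = sha_one, zero = (\<lambda>n. 0), add = (\<lambda>a b n. a n + b n)\<rparr>"

text \<open>Completion = direct product: all coefficient sequences.\<close>
definition sha_hat_ring :: "'a::comm_ring_1 \<Rightarrow> (nat \<Rightarrow> 'a) ring" where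
  "sha_hat_ring lam = \<lparr>carrier = UNIV, mult = sha_mult lam,
      one = sha_one, zero = (\<lambda>n. 0), add = (\<lambda>a b n. a n + b n)\<rparr>"

end

theory Submission
  imports Defs "HOL-Computational_Algebra.Polynomial" "HOL-Computational_Algebra.Primes"
begin

lemma binom_id:
  assumes "m \<le> M" "n \<le> M"
  shows "(M choose m) * (M choose n) = (\<Sum>k\<le>m. if k \<le> n \<and> m+n-k \<le> M
           then (M choose (m+n-k)) * ((m+n-k) choose n) * (n choose k) else 0)"
proof -
  have "M choose m = (\<Sum>k\<le>m. (n choose k) * ((M-n) choose (m-k)))"
    using vandermonde[of n "M-n" m] assms by simp
  hence "(M choose m) * (M choose n) = (\<Sum>k\<le>m. (M choose n) * (n choose k) * ((M-n) choose (m-k)))"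
    by (subst mult.commute) (simp add: sum_distrib_left mult.assoc)
  also have "\<dots> = (\<Sum>k\<le>m. if k \<le> n \<and> m+n-k \<le> M
           then (M choose (m+n-k)) * ((m+n-k) choose n) * (n choose k) else 0)"
  proof (rule sum.cong[OF refl])
    fix k assume k: "k \<in> {..m}"
    show "(M choose n) * (n choose k) * ((M-n) choose (m-k)) = (if k \<le> n \<and> m+n-k \<le> M
           then (M choose (m+n-k)) * ((m+n-k) choose n) * (n choose k) else 0)"
    proof (cases "k \<le> n \<and> m+n-k \<le> M")
      case True
      have "(M choose (m+n-k)) * ((m+n-k) choose n) = (M choose n) * ((M - n) choose (m+n-k-n))"
        by (rule choose_mult) (use True k in auto)
      moreover have "m+n-k-n = m-k" using True k by auto
      ultimately show ?thesis using True by (simp add: mult_ac)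
    next
      case False
      then show ?thesis using k by auto
    qed
  qed
  finally show ?thesis .
qed

definition ev :: "'a::comm_ring_1 \<Rightarrow> nat \<Rightarrow> (nat \<Rightarrow> 'a) \<Rightarrow> 'a" where
  "ev lam M a = (\<Sum>n\<le>M. of_nat (M choose n) * lam ^ n * a n)"

lemma box_filter:
  fixes f :: "nat \<Rightarrow> 'a::comm_monoid_add"
  shows "(\<Sum>p\<le>M. if P p then f p else 0) = sum f {p\<in>{..M}. P p}"
  by (subst sum.inter_filter) auto

lemma box_restrict:
  fixes f :: "nat \<Rightarrow> 'a::comm_monoid_add"
  assumes "m \<le> M"
  shows "(\<Sum>k\<le>M. if k \<le> m then f k else 0) = (\<Sum>k\<le>m. f k)"
proof -
  have "(\<Sum>k\<le>M. if k \<le> m then f k else 0) = (\<Sum>k\<le>m. if k \<le> m then f k else 0)"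
    by (rule sum.mono_neutral_right) (use assms in auto)
  also have "\<dots> = (\<Sum>k\<le>m. f k)" by (rule sum.cong) auto
  finally show ?thesis .
qed

lemma inner_reindex:
  fixes f :: "nat \<Rightarrow> 'a::comm_monoid_add"
  assumes "k \<le> n" "n \<le> M"
  shows "(\<Sum>p\<le>M. if n \<le> p then f p else 0) =
         (\<Sum>m\<le>M. if k \<le> m \<and> m + n - k \<le> M then f (m + n - k) else 0)"
proof -
  have "(\<Sum>p\<le>M. if n \<le> p then f p else 0) = sum f {n..M}"
    by (simp add: box_filter) (rule sum.cong, auto)
  also have "{n..M} = {k + (n-k) .. (M + k - n) + (n-k)}" using assms by auto
  also have "sum f \<dots> = (\<Sum>i\<in>{k..M+k-n}. f (i + (n-k)))"
    by (rule sum.shift_bounds_cl_nat_ivl)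
  also have "\<dots> = (\<Sum>i\<in>{k..M+k-n}. f (i + n - k))"
    by (rule sum.cong) (use assms in auto)
  also have "\<dots> = (\<Sum>m\<le>M. if k \<le> m \<and> m + n - k \<le> M then f (m + n - k) else 0)"
    by (simp add: box_filter) (rule sum.cong, use assms in auto)
  finally show ?thesis .
qed

lemma ev_mult: "ev lam M (sha_mult lam a b) = ev lam M a * ev lam M b"
proof -
  define G where "G m n k = of_nat ((M choose (m+n-k)) * ((m+n-k) choose n) * (n choose k)) * lam^(m+n) * a m * b n" for m n k
  define T where "T p n k = of_nat ((M choose p) * (p choose n) * (n choose k)) * lam^(p+k) * a (p-n+k) * b n" for p n k
  have "ev lam M a * ev lam M b = (\<Sum>m\<le>M. \<Sum>n\<le>M. of_nat ((M choose m) * (M choose n)) * lam^(m+n) * a m * b n)"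
    unfolding ev_def sum_product by (rule sum.cong[OF refl], rule sum.cong[OF refl]) (simp add: power_add mult_ac)
  also have "\<dots> = (\<Sum>m\<le>M. \<Sum>n\<le>M. \<Sum>k\<le>m. if k \<le> n \<and> m+n-k \<le> M then G m n k else 0)"
  proof (rule sum.cong[OF refl], rule sum.cong[OF refl])
    fix m n assume "m \<in> {..M}" "n \<in> {..M}"
    hence "(M choose m) * (M choose n) = (\<Sum>k\<le>m. if k \<le> n \<and> m+n-k \<le> M
           then (M choose (m+n-k)) * ((m+n-k) choose n) * (n choose k) else 0)"
      by (intro binom_id) auto
    hence "(of_nat ((M choose m) * (M choose n)) :: 'a) = (\<Sum>k\<le>m. if k \<le> n \<and> m+n-k \<le> M
           then of_nat ((M choose (m+n-k)) * ((m+n-k) choose n) * (n choose k)) else 0)"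
      by (simp add: of_nat_sum) (rule sum.cong; simp)
    thus "of_nat ((M choose m) * (M choose n)) * lam^(m+n) * a m * b n = (\<Sum>k\<le>m. if k \<le> n \<and> m+n-k \<le> M then G m n k else 0)"
      unfolding G_def by (simp add: sum_distrib_right) (rule sum.cong; simp)
  qed
  also have "\<dots> = (\<Sum>m\<le>M. \<Sum>n\<le>M. \<Sum>k\<le>M. if k \<le> m \<and> k \<le> n \<and> m+n-k \<le> M then G m n k else 0)"
  proof (rule sum.cong[OF refl], rule sum.cong[OF refl])
    fix m n assume m: "m \<in> {..M}" "n \<in> {..M}"
    have "(\<Sum>k\<le>M. if k \<le> m \<and> k \<le> n \<and> m+n-k \<le> M then G m n k else 0) =
       (\<Sum>k\<le>M. if k \<le> m then (if k \<le> n \<and> m+n-k \<le> M then G m n k else 0) else 0)"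
      by (rule sum.cong) auto
    also have "\<dots> = (\<Sum>k\<le>m. if k \<le> n \<and> m+n-k \<le> M then G m n k else 0)"
      by (rule box_restrict) (use m in auto)
    finally show "(\<Sum>k\<le>m. if k \<le> n \<and> m+n-k \<le> M then G m n k else 0) = (\<Sum>k\<le>M. if k \<le> m \<and> k \<le> n \<and> m+n-k \<le> M then G m n k else 0)"
      by simp
  qed
  also have "\<dots> = (\<Sum>n\<le>M. \<Sum>k\<le>M. \<Sum>m\<le>M. if k \<le> m \<and> k \<le> n \<and> m+n-k \<le> M then G m n k else 0)"
    by (subst sum.swap) (rule sum.cong[OF refl], subst sum.swap, rule refl)
  also have "\<dots> = (\<Sum>n\<le>M. \<Sum>k\<le>M. \<Sum>p\<le>M. if n \<le> p \<and> k \<le> n then T p n k else 0)"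
  proof (rule sum.cong[OF refl], rule sum.cong[OF refl])
    fix n k assume n: "n \<in> {..M}" and k: "k \<in> {..M}"
    show "(\<Sum>m\<le>M. if k \<le> m \<and> k \<le> n \<and> m+n-k \<le> M then G m n k else 0) = (\<Sum>p\<le>M. if n \<le> p \<and> k \<le> n then T p n k else 0)"
    proof (cases "k \<le> n")
      case False thus ?thesis by simp
    next
      case True
      have "(\<Sum>p\<le>M. if n \<le> p \<and> k \<le> n then T p n k else 0) = (\<Sum>p\<le>M. if n \<le> p then T p n k else 0)"
        using True by simp
      also have "\<dots> = (\<Sum>m\<le>M. if k \<le> m \<and> m + n - k \<le> M then T (m + n - k) n k else 0)"
        by (rule inner_reindex) (use True n in auto)
      also have "\<dots> = (\<Sum>m\<le>M. if k \<le> m \<and> k \<le> n \<and> m+n-k \<le> M then G m n k else 0)"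
      proof (rule sum.cong[OF refl])
        fix m assume "m \<in> {..M}"
        show "(if k \<le> m \<and> m + n - k \<le> M then T (m + n - k) n k else 0) = (if k \<le> m \<and> k \<le> n \<and> m+n-k \<le> M then G m n k else 0)"
        proof (cases "k \<le> m")
          case True2: True
          have e1: "m + n - k - n + k = m" using True True2 by auto
          have e2: "m + n - k + k = m + n" using True True2 by auto
          show ?thesis using True True2 unfolding T_def G_def e1 e2 by (simp add: mult_ac)
        qed simp
      qed
      finally show ?thesis by simp
    qed
  qed
  also have "\<dots> = (\<Sum>p\<le>M. \<Sum>n\<le>M. \<Sum>k\<le>M. if n \<le> p \<and> k \<le> n then T p n k else 0)"
    by (subst sum.swap) (rule sum.cong[OF refl], subst sum.swap, rule refl)
  also have "\<dots> = ev lam M (sha_mult lam a b)"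
    unfolding ev_def sha_mult_def sum_distrib_left
  proof (rule sum.cong[OF refl])
    fix p assume p: "p \<in> {..M}"
    have "(\<Sum>n\<le>M. \<Sum>k\<le>M. if n \<le> p \<and> k \<le> n then T p n k else 0) = (\<Sum>n\<le>M. if n \<le> p then (\<Sum>k\<le>n. T p n k) else 0)"
    proof (rule sum.cong[OF refl])
      fix n assume n: "n \<in> {..M}"
      show "(\<Sum>k\<le>M. if n \<le> p \<and> k \<le> n then T p n k else 0) = (if n \<le> p then (\<Sum>k\<le>n. T p n k) else 0)"
      proof (cases "n \<le> p")
        case True
        have "(\<Sum>k\<le>M. if n \<le> p \<and> k \<le> n then T p n k else 0) = (\<Sum>k\<le>M. if k \<le> n then T p n k else 0)"
          using True by simp
        also have "\<dots> = (\<Sum>k\<le>n. T p n k)" by (rule box_restrict) (use n in auto)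
        finally show ?thesis using True by simp
      qed simp
    qed
    also have "\<dots> = (\<Sum>n\<le>p. \<Sum>k\<le>n. T p n k)"
      by (rule box_restrict) (use p in auto)
    also have "\<dots> = (\<Sum>n\<le>p. \<Sum>k\<le>n. of_nat (M choose p) * lam ^ p * (of_nat (p choose n) * of_nat (n choose k) * lam ^ k * a (p - n + k) * b n))"
      unfolding T_def by (simp add: power_add mult_ac)
    finally show "(\<Sum>n\<le>M. \<Sum>k\<le>M. if n \<le> p \<and> k \<le> n then T p n k else 0) = (\<Sum>n\<le>p. \<Sum>k\<le>n. of_nat (M choose p) * lam ^ p * (of_nat (p choose n) * of_nat (n choose k) * lam ^ k * a (p - n + k) * b n))" .
  qed
  finally show ?thesis ..
qed

lemma ev_add: "ev lam M (\<lambda>n. a n + b n) = ev lam M a + ev lam M b"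
  unfolding ev_def by (simp add: sum.distrib distrib_left)

lemma ev_one: "ev lam M sha_one = 1"
  unfolding ev_def sha_one_def by (simp add: if_distrib sum.delta cong: if_cong)

lemma pow_regular:
  fixes lam :: "'a::comm_ring_1"
  assumes reg: "\<forall>x. lam * x = 0 \<longrightarrow> x = 0"
  shows "lam ^ n * x = 0 \<Longrightarrow> x = 0"
proof (induction n arbitrary: x)
  case 0 thus ?case by simp
next
  case (Suc n)
  hence "lam ^ n * (lam * x) = 0" by (simp add: mult_ac)
  hence "lam * x = 0" using Suc.IH by blast
  thus ?case using reg by blast
qed

lemma ev_inj:
  assumes reg: "\<forall>x. lam * x = 0 \<longrightarrow> (x::'a::comm_ring_1) = 0"
    and eq: "\<And>M. ev lam M a = ev lam M b"
  shows "a = b"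
proof
  fix n show "a n = b n"
  proof (induction n rule: less_induct)
    case (less n)
    have "0 = ev lam n a - ev lam n b" using eq by simp
    also have "\<dots> = (\<Sum>m\<le>n. of_nat (n choose m) * lam ^ m * (a m - b m))"
      unfolding ev_def by (simp add: sum_subtractf algebra_simps)
    also have "\<dots> = (\<Sum>m\<in>{n}. of_nat (n choose m) * lam ^ m * (a m - b m))"
      by (rule sum.mono_neutral_right) (use less in auto)
    also have "\<dots> = lam ^ n * (a n - b n)" by simp
    finally have "lam ^ n * (a n - b n) = 0" by simp
    hence "a n - b n = 0" using pow_regular[OF reg] by blast
    thus ?case by simp
  qed
qed

abbreviation PX :: "'a::comm_ring_1 poly" where "PX \<equiv> [:0, 1:]"

lemma PX_regular: "\<forall>x. PX * x = 0 \<longrightarrow> x = (0::'a::comm_ring_1 poly)"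
  by simp

lemma poly_sha:
  "poly (sha_mult PX A B p) lam = sha_mult lam (\<lambda>n. poly (A n) lam) (\<lambda>n. poly (B n) lam) p"
  unfolding sha_mult_def by (simp add: poly_sum)

lemma sha_assoc_reg:
  assumes reg: "\<forall>x. lam * x = 0 \<longrightarrow> (x::'a::comm_ring_1) = 0"
  shows "sha_mult lam (sha_mult lam a b) c = sha_mult lam a (sha_mult lam b c)"
  by (rule ev_inj[OF reg]) (simp add: ev_mult mult_ac)

lemma sha_comm_reg:
  assumes reg: "\<forall>x. lam * x = 0 \<longrightarrow> (x::'a::comm_ring_1) = 0"
  shows "sha_mult lam a b = sha_mult lam b a"
  by (rule ev_inj[OF reg]) (simp add: ev_mult mult_ac)

lemma sha_one_reg:
  assumes reg: "\<forall>x. lam * x = 0 \<longrightarrow> (x::'a::comm_ring_1) = 0"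
  shows "sha_mult lam sha_one a = a"
  by (rule ev_inj[OF reg]) (simp add: ev_mult ev_one)

lemma const_poly_eq: "(\<lambda>n. poly [:a n:] lam) = a"
  by simp

lemma sha_assoc:
  "sha_mult lam (sha_mult lam a b) c = sha_mult lam a (sha_mult lam b c)"
proof -
  define A where "A = (\<lambda>n. [:a n:])"
  define B where "B = (\<lambda>n. [:b n:])"
  define C where "C = (\<lambda>n. [:c n:])"
  have ea: "a = (\<lambda>n. poly (A n) lam)" and eb: "b = (\<lambda>n. poly (B n) lam)" and ec: "c = (\<lambda>n. poly (C n) lam)"
    by (simp_all add: A_def B_def C_def)
  have "sha_mult lam (sha_mult lam a b) c = (\<lambda>p. poly (sha_mult PX (sha_mult PX A B) C p) lam)"
    unfolding ea eb ec by (simp add: poly_sha)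
  also have "\<dots> = (\<lambda>p. poly (sha_mult PX A (sha_mult PX B C) p) lam)"
    by (simp add: sha_assoc_reg[OF PX_regular])
  also have "\<dots> = sha_mult lam a (sha_mult lam b c)"
    unfolding ea eb ec by (simp add: poly_sha)
  finally show ?thesis .
qed

lemma sha_comm: "sha_mult lam a b = sha_mult lam b a"
proof -
  define A where "A = (\<lambda>n. [:a n:])"
  define B where "B = (\<lambda>n. [:b n:])"
  have ea: "a = (\<lambda>n. poly (A n) lam)" and eb: "b = (\<lambda>n. poly (B n) lam)"
    by (simp_all add: A_def B_def)
  have "sha_mult lam a b = (\<lambda>p. poly (sha_mult PX A B p) lam)"
    unfolding ea eb by (simp add: poly_sha)
  also have "\<dots> = (\<lambda>p. poly (sha_mult PX B A p) lam)"
    by (simp add: sha_comm_reg[OF PX_regular])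
  also have "\<dots> = sha_mult lam b a"
    unfolding ea eb by (simp add: poly_sha)
  finally show ?thesis .
qed

lemma sha_one_left: "sha_mult lam sha_one a = a"
proof -
  define A where "A = (\<lambda>n. [:a n:])"
  have ea: "a = (\<lambda>n. poly (A n) lam)" by (simp add: A_def)
  have eo: "(sha_one :: nat \<Rightarrow> 'a) = (\<lambda>n. poly (sha_one n) lam)"
    by (auto simp: sha_one_def)
  have "sha_mult lam sha_one a = (\<lambda>p. poly (sha_mult PX sha_one A p) lam)"
    by (subst eo, subst ea) (simp add: poly_sha)
  also have "\<dots> = a"
    by (simp add: sha_one_reg[OF PX_regular] A_def)
  finally show ?thesis .
qed

lemma sha_distrib: "sha_mult lam (\<lambda>n. a n + b n) c = (\<lambda>n. sha_mult lam a c n + sha_mult lam b c n)"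
  unfolding sha_mult_def by (simp add: sum.distrib[symmetric] algebra_simps)

definition bnd :: "nat \<Rightarrow> (nat \<Rightarrow> 'a::zero) \<Rightarrow> bool" where
  "bnd d a \<longleftrightarrow> (\<forall>i>d. a i = 0)"

definition low :: "nat \<Rightarrow> (nat \<Rightarrow> 'a::zero) \<Rightarrow> bool" where
  "low d a \<longleftrightarrow> (\<forall>i<d. a i = 0)"

lemma fin_supp_iff: "finite {n. a n \<noteq> 0} \<longleftrightarrow> (\<exists>d. bnd d a)"
  unfolding bnd_def finite_nat_set_iff_bounded_le
  by (metis (mono_tags, lifting) mem_Collect_eq not_le)

lemma double_sum_single:
  fixes f :: "nat \<Rightarrow> nat \<Rightarrow> 'a::comm_monoid_add"
  assumes "e \<le> p" "\<And>n k. n \<le> p \<Longrightarrow> k \<le> n \<Longrightarrow> (n, k) \<noteq> (e, 0) \<Longrightarrow> f n k = 0"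
  shows "(\<Sum>n\<le>p. \<Sum>k\<le>n. f n k) = f e 0"
proof -
  have "(\<Sum>n\<le>p. \<Sum>k\<le>n. f n k) = (\<Sum>n\<in>{e}. \<Sum>k\<le>n. f n k)"
    by (rule sum.mono_neutral_right) (use assms in \<open>auto intro!: sum.neutral\<close>)
  also have "\<dots> = (\<Sum>k\<le>e. f e k)" by simp
  also have "\<dots> = (\<Sum>k\<in>{0}. f e k)"
    by (rule sum.mono_neutral_right) (use assms in auto)
  finally show ?thesis by simp
qed

lemma mult_bnd:
  assumes a: "bnd d a" and b: "bnd e b"
  shows "bnd (d+e) (sha_mult lam a b)"
    and "sha_mult lam a b (d+e) = of_nat ((d+e) choose e) * a d * b e"
proof -
  have z: "of_nat (p choose n) * of_nat (n choose k) * lam ^ k * a (p - n + k) * b n = 0"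
    if "n \<le> p" "k \<le> n" "d + e < p \<or> (p = d + e \<and> (n, k) \<noteq> (e, 0))" for p n k
  proof (cases "e < n")
    case True thus ?thesis using b by (simp add: bnd_def)
  next
    case False
    hence "d < p - n + k" using that by auto
    thus ?thesis using a by (simp add: bnd_def)
  qed
  show "bnd (d+e) (sha_mult lam a b)"
    unfolding bnd_def sha_mult_def using z by (auto intro!: sum.neutral)
  show "sha_mult lam a b (d+e) = of_nat ((d+e) choose e) * a d * b e"
    unfolding sha_mult_def by (subst double_sum_single[where e=e]) (use z in auto)
qed

lemma sha_mult0: "sha_mult 0 a b p = (\<Sum>n\<le>p. of_nat (p choose n) * a (p-n) * b n)"
  unfolding sha_mult_def
proof (rule sum.cong[OF refl])
  fix n assume "n \<in> {..p}"
  have "(\<Sum>k\<le>n. of_nat (p choose n) * of_nat (n choose k) * 0 ^ k * a (p - n + k) * b n) =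
        (\<Sum>k\<in>{0}. of_nat (p choose n) * of_nat (n choose k) * 0 ^ k * a (p - n + k) * b n)"
    by (rule sum.mono_neutral_right) (auto simp: power_0_left)
  thus "(\<Sum>k\<le>n. of_nat (p choose n) * of_nat (n choose k) * 0 ^ k * a (p - n + k) * b n) = of_nat (p choose n) * a (p - n) * b n"
    by simp
qed

lemma mult_low:
  assumes a: "low d a" and b: "low e b"
  shows "low (d+e) (sha_mult 0 a b)"
    and "sha_mult 0 a b (d+e) = of_nat ((d+e) choose e) * a d * b e"
proof -
  have z: "of_nat (p choose n) * a (p-n) * b n = 0"
    if "n \<le> p" "p < d + e \<or> (p = d + e \<and> n \<noteq> e)" for p n
  proof (cases "n < e")
    case True thus ?thesis using b by (simp add: low_def)
  next
    case False
    hence "p - n < d" using that by auto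
    thus ?thesis using a by (simp add: low_def)
  qed
  show "low (d+e) (sha_mult 0 a b)"
    unfolding low_def sha_mult0 using z by (auto intro!: sum.neutral)
  have "sha_mult 0 a b (d+e) = (\<Sum>n\<in>{e}. of_nat ((d+e) choose n) * a (d+e-n) * b n)"
    unfolding sha_mult0 by (rule sum.mono_neutral_right) (use z in auto)
  thus "sha_mult 0 a b (d+e) = of_nat ((d+e) choose e) * a d * b e" by simp
qed

lemma cring_hat: "cring (sha_hat_ring lam)"
proof (rule cringI)
  show "abelian_group (sha_hat_ring lam)"
    by (rule abelian_groupI) (auto simp: sha_hat_ring_def add.assoc add.commute intro!: exI[of _ "\<lambda>n. - _ n"])
  show "comm_monoid (sha_hat_ring lam)"
    by (rule comm_monoidI) (auto simp: sha_hat_ring_def sha_assoc sha_one_left sha_comm[of lam])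
  show "\<And>x y z. x \<in> carrier (sha_hat_ring lam) \<Longrightarrow> y \<in> carrier (sha_hat_ring lam) \<Longrightarrow> z \<in> carrier (sha_hat_ring lam) \<Longrightarrow>
          (x \<oplus>\<^bsub>sha_hat_ring lam\<^esub> y) \<otimes>\<^bsub>sha_hat_ring lam\<^esub> z = x \<otimes>\<^bsub>sha_hat_ring lam\<^esub> z \<oplus>\<^bsub>sha_hat_ring lam\<^esub> y \<otimes>\<^bsub>sha_hat_ring lam\<^esub> z"
    by (simp add: sha_hat_ring_def sha_distrib)
qed

lemma fin_add: "finite {n. a n \<noteq> 0} \<Longrightarrow> finite {n. b n \<noteq> (0::'a::comm_ring_1)} \<Longrightarrow> finite {n. a n + b n \<noteq> 0}"
  by (rule finite_subset[of _ "{n. a n \<noteq> 0} \<union> {n. b n \<noteq> 0}"]) auto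

lemma fin_mult: "finite {n. a n \<noteq> 0} \<Longrightarrow> finite {n. b n \<noteq> (0::'a::comm_ring_1)} \<Longrightarrow> finite {n. sha_mult lam a b n \<noteq> 0}"
  unfolding fin_supp_iff using mult_bnd(1) by blast

lemma fin_one: "finite {n. (sha_one :: nat \<Rightarrow> 'a::comm_ring_1) n \<noteq> 0}"
  by (rule finite_subset[of _ "{0}"]) (auto simp: sha_one_def)

lemma cring_sha: "cring (sha_ring lam)"
proof (rule cringI)
  show "abelian_group (sha_ring lam)"
  proof (rule abelian_groupI)
    fix x assume "x \<in> carrier (sha_ring lam)"
    moreover have "{n. - x n \<noteq> 0} = {n. x n \<noteq> 0}" by simp
    ultimately show "\<exists>y\<in>carrier (sha_ring lam). y \<oplus>\<^bsub>sha_ring lam\<^esub> x = \<zero>\<^bsub>sha_ring lam\<^esub>"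
      by (intro bexI[of _ "\<lambda>n. - x n"]) (auto simp: sha_ring_def)
  qed (auto simp: sha_ring_def add.assoc add.commute intro: fin_add)
  show "comm_monoid (sha_ring lam)"
    by (rule comm_monoidI) (auto simp: sha_ring_def sha_assoc sha_one_left sha_comm[of lam] fin_mult fin_one)
  show "\<And>x y z. x \<in> carrier (sha_ring lam) \<Longrightarrow> y \<in> carrier (sha_ring lam) \<Longrightarrow> z \<in> carrier (sha_ring lam) \<Longrightarrow>
          (x \<oplus>\<^bsub>sha_ring lam\<^esub> y) \<otimes>\<^bsub>sha_ring lam\<^esub> z = x \<otimes>\<^bsub>sha_ring lam\<^esub> z \<oplus>\<^bsub>sha_ring lam\<^esub> y \<otimes>\<^bsub>sha_ring lam\<^esub> z"
    by (simp add: sha_ring_def sha_distrib)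
qed

lemma noeth_chain:
  assumes "noetherian_ring R" "\<And>j. ideal (I j) R" "\<And>j k. j \<le> k \<Longrightarrow> I j \<subseteq> I k"
  shows "\<exists>j. I (Suc j) \<subseteq> I j"
proof -
  interpret noetherian_ring R by fact
  have ch: "subset.chain {I. ideal I R} (range I)"
  proof -
    have "x \<subseteq> y \<or> y \<subseteq> x" if xy: "x \<in> range I" "y \<in> range I" for x y
    proof -
      obtain j k where "x = I j" "y = I k" using xy by blast
      thus ?thesis using assms(3)[of j k] assms(3)[of k j] by (cases "j \<le> k") auto
    qed
    thus ?thesis unfolding pred_on.chain_def using assms(2) by auto
  qed
  have "\<Union>(range I) \<in> range I" by (rule ideal_chain_is_trivial) (use ch in auto)
  then obtain j where j: "\<Union>(range I) = I j" by auto
  hence "I (Suc j) \<subseteq> I j" by blast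
  thus ?thesis ..
qed

lemma ideal_from_pred:
  fixes R (structure)
  assumes R: "cring R" and mR: "mult R = sha_mult lam" and aR: "add R = (\<lambda>a b n. a n + b n)"
    and zR: "zero R = (\<lambda>n. 0)"
    and P0: "P (\<lambda>n. 0)" and Padd: "\<And>a b. P a \<Longrightarrow> P b \<Longrightarrow> P (\<lambda>n. a n + b n)"
    and Pneg: "\<And>a. P a \<Longrightarrow> P (\<lambda>n. - a n)"
    and Pmult: "\<And>r a. r \<in> carrier R \<Longrightarrow> a \<in> carrier R \<Longrightarrow> P a \<Longrightarrow> P (sha_mult lam r a)"
  shows "ideal {a \<in> carrier R. P a} R"
proof -
  interpret cring R by fact
  have neg: "\<ominus> a = (\<lambda>n. - a n)" if "a \<in> carrier R" for a
  proof
    fix n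
    have "a \<oplus> \<ominus> a = \<zero>" using that by (simp add: r_neg)
    hence "a n + (\<ominus> a) n = 0" using aR zR by (metis)
    thus "(\<ominus> a) n = - a n" by (metis add.commute eq_neg_iff_add_eq_0)
  qed
  show ?thesis
  proof (rule idealI)
    show "ring R" by (rule ring_axioms)
    show "subgroup {a \<in> carrier R. P a} (add_monoid R)"
    proof (rule add.subgroupI)
      show "{a \<in> carrier R. P a} \<subseteq> carrier R" by auto
      show "{a \<in> carrier R. P a} \<noteq> {}" using P0 zR zero_closed by (metis (mono_tags, lifting) empty_iff mem_Collect_eq)
      fix a assume a: "a \<in> {a \<in> carrier R. P a}"
      thus "\<ominus> a \<in> {a \<in> carrier R. P a}"
        using neg[of a] Pneg[of a] a_inv_closed[of a] by auto
      fix b assume "b \<in> {a \<in> carrier R. P a}"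
      thus "a \<oplus> b \<in> {a \<in> carrier R. P a}"
        using a Padd[of a b] aR add.m_closed[of a b] by auto
    qed
    fix a x assume "a \<in> {a \<in> carrier R. P a}" "x \<in> carrier R"
    thus "x \<otimes> a \<in> {a \<in> carrier R. P a}" "a \<otimes> x \<in> {a \<in> carrier R. P a}"
      using Pmult[of x a] mR m_comm[of x a] m_closed[of x a] by auto
  qed
qed

lemma nonQ_prime:
  assumes "\<not> is_Q_algebra TYPE('a::comm_ring_1)"
  shows "\<exists>p. prime p \<and> \<not> (of_nat p :: 'a) dvd 1"
proof (rule ccontr)
  assume H: "\<not> ?thesis"
  have "(of_nat n :: 'a) dvd 1" if "n > 0" for n
    using that
  proof (induction n rule: less_induct)
    case (less n)
    show ?case
    proof (cases "n = 1")
      case True thus ?thesis by simp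
    next
      case False
      then obtain p where p: "prime p" "p dvd n" using prime_factor_nat by blast
      then obtain m where m: "n = p * m" by (auto elim: dvdE)
      have "m > 0" using less.prems m by (cases m) auto
      moreover have "m < n" using m p less.prems prime_gt_1_nat[of p] by (simp add: \<open>m > 0\<close>)
      ultimately have "(of_nat m :: 'a) dvd 1" using less.IH by blast
      moreover have "(of_nat p :: 'a) dvd 1" using H p by blast
      ultimately have "(of_nat p * of_nat m :: 'a) dvd 1 * 1" by (metis mult_dvd_mono)
      thus ?thesis using m by simp
    qed
  qed
  thus False using assms unfolding is_Q_algebra_def by blast
qed

lemma prime_pow_choose:
  assumes "prime (p::nat)" "0 < n" "n < p ^ i"
  shows "p dvd (p ^ i choose n)"
proof (rule ccontr)
  assume H: "\<not> p dvd (p ^ i choose n)"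
  have "n * (p ^ i choose n) = p ^ i * ((p ^ i - 1) choose (n - 1))"
    using times_binomial_minus1_eq[OF assms(2)] by simp
  hence "p ^ i dvd n * (p ^ i choose n)" by simp
  moreover have "coprime (p ^ i) (p ^ i choose n)"
    using prime_imp_coprime[OF assms(1) H] by simp
  ultimately have "p ^ i dvd n" using coprime_dvd_mult_left_iff by blast
  hence "p ^ i \<le> n" using assms(2) by (rule dvd_imp_le)
  thus False using assms(3) by simp
qed

lemma of_nat_dvdI: "(p::nat) dvd m \<Longrightarrow> (of_nat p :: 'a::comm_ring_1) dvd of_nat m"
  by (auto elim!: dvdE)

lemma mult_coeff_dvd:
  fixes a r :: "nat \<Rightarrow> 'a::comm_ring_1"
  assumes "(of_nat p :: 'a) dvd a 0" "of_nat p dvd a q" "\<And>n. 0 < n \<Longrightarrow> n < q \<Longrightarrow> p dvd (q choose n)"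
  shows "of_nat p dvd sha_mult lam r a q"
  unfolding sha_mult_def
proof (intro dvd_sum)
  fix n k assume n: "n \<in> {..q}" and k: "k \<in> {..n}"
  consider "n = 0" | "n = q" | "0 < n \<and> n < q" using n by fastforce
  thus "of_nat p dvd of_nat (q choose n) * of_nat (n choose k) * lam ^ k * r (q - n + k) * a n"
  proof cases
    case 1 thus ?thesis using assms(1) by simp
  next
    case 2 thus ?thesis using assms(2) by simp
  next
    case 3
    hence "(of_nat p :: 'a) dvd of_nat (q choose n)" using assms(3) of_nat_dvdI by blast
    thus ?thesis by (simp add: mult.assoc)
  qed
qed

lemma part4_generic:
  fixes lam :: "'a::comm_ring_1"
  assumes nQ: "\<not> is_Q_algebra TYPE('a)"
    and R: "cring R" and mR: "mult R = sha_mult lam" and aR: "add R = (\<lambda>a b n. a n + b n)"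
    and zR: "zero R = (\<lambda>n. 0)"
    and eR: "\<And>q. (\<lambda>n. if n = q then 1 else 0) \<in> carrier R"
  shows "\<not> noetherian_ring R"
proof
  assume N: "noetherian_ring R"
  obtain p where p: "prime p" "\<not> (of_nat p :: 'a) dvd 1" using nonQ_prime[OF nQ] by blast
  define P where "P j a \<longleftrightarrow> (of_nat p :: 'a) dvd a 0 \<and> (\<forall>i>j. (of_nat p :: 'a) dvd a (p ^ i))" for j a
  define I where "I j = {a \<in> carrier R. P j a}" for j
  have id: "ideal (I j) R" for j
    unfolding I_def
  proof (rule ideal_from_pred[OF R mR aR zR])
    show "P j (\<lambda>n. 0)" by (simp add: P_def)
    show "P j (\<lambda>n. a n + b n)" if "P j a" "P j b" for a b using that by (auto simp: P_def)
    show "P j (\<lambda>n. - a n)" if "P j a" for a using that by (auto simp: P_def)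
    fix r a assume "P j a"
    thus "P j (sha_mult lam r a)"
      unfolding P_def
    proof (intro conjI allI impI)
      assume H: "of_nat p dvd a 0 \<and> (\<forall>i>j. of_nat p dvd a (p ^ i))"
      show "of_nat p dvd sha_mult lam r a 0" by (rule mult_coeff_dvd) (use H in auto)
      fix i assume "j < i"
      show "of_nat p dvd sha_mult lam r a (p ^ i)"
        by (rule mult_coeff_dvd) (use H \<open>j < i\<close> prime_pow_choose[OF p(1)] in auto)
    qed
  qed
  have mono: "I j \<subseteq> I k" if "j \<le> k" for j k
    using that unfolding I_def P_def by auto
  obtain j where j: "I (Suc j) \<subseteq> I j" using noeth_chain[OF N id mono] by blast
  define e where "e = (\<lambda>n. if n = p ^ Suc j then 1 else (0::'a))"
  have p1: "p > 1" using p(1) prime_gt_1_nat by blast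
  have "e \<in> I (Suc j)"
    unfolding I_def P_def e_def using eR p1 power_inject_exp[of p] by (auto simp del: power_Suc)
  hence "e \<in> I j" using j by blast
  hence "(of_nat p :: 'a) dvd e (p ^ Suc j)" unfolding I_def P_def by auto
  thus False using p(2) by (simp add: e_def)
qed

lemma ev_zero: "ev lam M (\<lambda>n. 0) = 0" by (simp add: ev_def)
lemma ev_neg: "ev lam M (\<lambda>n. - a n) = - ev lam M a" by (simp add: ev_def sum_negf)

lemma alt_sum:
  assumes "N < M"
  shows "(\<Sum>n\<le>M. of_nat (M choose n) * (if N \<le> n then (-1) ^ (n - N) * of_nat (n choose N) else 0)) = (0::'a::comm_ring_1)"
proof -
  have "(\<Sum>n\<le>M. of_nat (M choose n) * (if N \<le> n then (-1) ^ (n - N) * of_nat (n choose N) else 0))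
     = (\<Sum>n\<in>{N..M}. of_nat (M choose n) * ((-1) ^ (n - N) * of_nat (n choose N)) :: 'a)"
    by (rule sum.mono_neutral_cong_right) auto
  also have "\<dots> = (\<Sum>n\<in>{N..M}. of_nat (M choose N) * ((-1) ^ (n - N) * of_nat ((M - N) choose (n - N))))"
  proof (rule sum.cong[OF refl])
    fix n assume "n \<in> {N..M}"
    hence "(M choose n) * (n choose N) = (M choose N) * ((M - N) choose (n - N))"
      by (intro choose_mult) auto
    hence "(of_nat (M choose n) * of_nat (n choose N) :: 'a) = of_nat (M choose N) * of_nat ((M - N) choose (n - N))"
      by (metis of_nat_mult)
    thus "of_nat (M choose n) * ((-1) ^ (n - N) * of_nat (n choose N)) = (of_nat (M choose N) * ((-1) ^ (n - N) * of_nat ((M - N) choose (n - N))) :: 'a)"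
      by (metis (no_types, lifting) mult.assoc mult.left_commute)
  qed
  also have "\<dots> = of_nat (M choose N) * (\<Sum>n\<in>{N..M}. (-1) ^ (n - N) * of_nat ((M - N) choose (n - N)))"
    by (simp add: sum_distrib_left)
  also have "(\<Sum>n\<in>{N..M}. (-1) ^ (n - N) * of_nat ((M - N) choose (n - N)) :: 'a) =
             (\<Sum>i\<le>M - N. (-1) ^ i * of_nat ((M - N) choose i))"
  proof -
    have "{N..M} = {0 + N..(M - N) + N}" using assms by simp
    hence "(\<Sum>n\<in>{N..M}. (-1) ^ (n - N) * of_nat ((M - N) choose (n - N)) :: 'a) =
          (\<Sum>i\<in>{0..M - N}. (-1) ^ (i + N - N) * of_nat ((M - N) choose (i + N - N)))"
      by (simp only: sum.shift_bounds_cl_nat_ivl)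
    thus ?thesis by (simp add: atLeast0AtMost)
  qed
  also have "\<dots> = 0" by (rule choose_alternating_sum) (use assms in simp)
  finally show ?thesis by simp
qed

lemma part3_generic:
  fixes lam :: "'a::comm_ring_1"
  assumes x: "x \<noteq> 0" "\<forall>n::nat. lam ^ n dvd x"
    and R: "cring R" and mR: "mult R = sha_mult lam" and aR: "add R = (\<lambda>a b n. a n + b n)"
    and zR: "zero R = (\<lambda>n. 0)"
    and cR: "carrier R = UNIV"
  shows "\<not> noetherian_ring R"
proof
  assume N: "noetherian_ring R"
  obtain y where y: "\<And>n. x = lam ^ n * y n" using x(2) unfolding dvd_def by metis
  define I where "I j = {a \<in> carrier R. \<forall>M\<ge>j. ev lam M a = 0}" for j
  have id: "ideal (I j) R" for j
    unfolding I_def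
    by (rule ideal_from_pred[OF R mR aR zR]) (auto simp: ev_zero ev_add ev_neg ev_mult)
  have mono: "I j \<subseteq> I k" if "j \<le> k" for j k
    using that unfolding I_def by auto
  obtain j where j: "I (Suc j) \<subseteq> I j" using noeth_chain[OF N id mono] by blast
  define f where "f = (\<lambda>n. if j \<le> n then (-1) ^ (n - j) * of_nat (n choose j) * y n else 0)"
  have evf: "ev lam M f = x * (\<Sum>n\<le>M. of_nat (M choose n) * (if j \<le> n then (-1) ^ (n - j) * of_nat (n choose j) else 0))" for M
    unfolding ev_def sum_distrib_left
  proof (rule sum.cong[OF refl])
    fix n
    show "of_nat (M choose n) * lam ^ n * f n = x * (of_nat (M choose n) * (if j \<le> n then (- 1) ^ (n - j) * of_nat (n choose j) else 0))"
      unfolding f_def y[of n] by (simp add: mult_ac)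
  qed
  have "f \<in> I (Suc j)"
    unfolding I_def using cR evf alt_sum[where N=j and 'a='a] by (auto simp: Suc_le_eq)
  hence "f \<in> I j" using j by blast
  hence "ev lam j f = 0" unfolding I_def by auto
  moreover have "ev lam j f = x"
  proof -
    have "(\<Sum>n\<le>j. of_nat (j choose n) * (if j \<le> n then (-1) ^ (n - j) * of_nat (n choose j) else 0)) =
          (\<Sum>n\<in>{j}. of_nat (j choose n) * (if j \<le> n then (-1) ^ (n - j) * of_nat (n choose j) else 0) :: 'a)"
      by (rule sum.mono_neutral_right) auto
    thus ?thesis using evf[of j] by simp
  qed
  ultimately show False using x(1) by simp
qed

definition shaR :: "'a::comm_ring_1 \<Rightarrow> (nat \<Rightarrow> 'a) ring \<Rightarrow> bool" where
  "shaR lam R \<longleftrightarrow> cring R \<and> mult R = sha_mult lam \<and> add R = (\<lambda>a b n. a n + b n) \<and> zero R = (\<lambda>n. 0)"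

lemma shaR_hat: "shaR lam (sha_hat_ring lam)"
  using cring_hat by (simp add: shaR_def sha_hat_ring_def)

lemma shaR_sha: "shaR lam (sha_ring lam)"
  using cring_sha by (simp add: shaR_def sha_ring_def)

lemma sha_neg:
  assumes "shaR lam R" "a \<in> carrier R"
  shows "a_inv R a = (\<lambda>n. - a n)"
proof
  fix n
  interpret cring R using assms by (simp add: shaR_def)
  have "a \<oplus>\<^bsub>R\<^esub> a_inv R a = \<zero>\<^bsub>R\<^esub>" using assms(2) by (simp add: r_neg)
  hence "a n + (a_inv R a) n = 0" using assms(1) unfolding shaR_def by metis
  thus "(a_inv R a) n = - a n" by (metis add.commute eq_neg_iff_add_eq_0)
qed

lemma ideal_add:
  assumes "shaR lam R" "ideal J R" "a \<in> J" "b \<in> J"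
  shows "(\<lambda>n. a n + b n) \<in> J"
  using additive_subgroup.a_closed[OF ideal.axioms(1)[OF assms(2)] assms(3,4)] assms(1)
  by (simp add: shaR_def)

lemma ideal_zero:
  assumes "shaR lam R" "ideal J R"
  shows "(\<lambda>n. 0) \<in> J"
  using additive_subgroup.zero_closed[OF ideal.axioms(1)[OF assms(2)]] assms(1)
  by (simp add: shaR_def)

lemma ideal_carrier:
  assumes "ideal J R" "a \<in> J" shows "a \<in> carrier R"
  using additive_subgroup.a_subset[OF ideal.axioms(1)[OF assms(1)]] assms(2) by blast

lemma ideal_neg:
  assumes "shaR lam R" "ideal J R" "a \<in> J"
  shows "(\<lambda>n. - a n) \<in> J"
  using additive_subgroup.a_inv_closed[OF ideal.axioms(1)[OF assms(2)] assms(3)]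
    sha_neg[OF assms(1) ideal_carrier[OF assms(2,3)]] by simp

lemma ideal_diff:
  assumes "shaR lam R" "ideal J R" "a \<in> J" "b \<in> J"
  shows "(\<lambda>n. a n - b n) \<in> J"
  using ideal_add[OF assms(1,2,3) ideal_neg[OF assms(1,2,4)]] by simp

lemma ideal_lmult:
  assumes "shaR lam R" "ideal J R" "r \<in> carrier R" "a \<in> J"
  shows "sha_mult lam r a \<in> J"
  using ideal.I_l_closed[OF assms(2) assms(4,3)] assms(1) by (simp add: shaR_def)

lemma ideal_sum:
  assumes "shaR lam R" "ideal J R" "finite S" "\<And>s. s \<in> S \<Longrightarrow> X s \<in> J"
  shows "(\<lambda>n. \<Sum>s\<in>S. X s n) \<in> J"
  using assms(3,4)
proof (induction S rule: finite_induct)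
  case empty thus ?case using ideal_zero[OF assms(1,2)] by simp
next
  case (insert x F)
  thus ?case using ideal_add[OF assms(1,2), of "X x" "\<lambda>n. \<Sum>s\<in>F. X s n"] by simp
qed

lemma tr_simps[simp]: "carrier type_ring = UNIV" "mult type_ring = (*)" "add type_ring = (+)"
  "zero type_ring = 0" "one type_ring = 1"
  by (simp_all add: type_ring_def)

lemma cring_tr: "cring (type_ring :: 'a::comm_ring_1 ring)"
proof (rule cringI)
  show "abelian_group (type_ring :: 'a ring)"
  proof (rule abelian_groupI)
    fix x :: 'a
    show "\<exists>y\<in>carrier type_ring. y \<oplus>\<^bsub>type_ring\<^esub> x = \<zero>\<^bsub>type_ring\<^esub>"
      by (rule bexI[of _ "- x"]) simp_all
  qed (auto simp: algebra_simps)
  show "comm_monoid (type_ring :: 'a ring)"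
    by (rule comm_monoidI) (auto simp: algebra_simps)
qed (auto simp: algebra_simps)

lemma tr_neg: "a_inv (type_ring :: 'a::comm_ring_1 ring) x = - x"
proof -
  interpret cring "type_ring :: 'a ring" by (rule cring_tr)
  have "x \<oplus>\<^bsub>type_ring\<^esub> a_inv type_ring x = \<zero>\<^bsub>type_ring\<^esub>" by (rule r_neg) simp
  thus ?thesis by (simp add: eq_neg_iff_add_eq_0 add.commute)
qed

lemma ideal_tr:
  assumes "(0::'a::comm_ring_1) \<in> S" "\<And>x y. x \<in> S \<Longrightarrow> y \<in> S \<Longrightarrow> x + y \<in> S"
    "\<And>x. x \<in> S \<Longrightarrow> - x \<in> S" "\<And>s x. x \<in> S \<Longrightarrow> s * x \<in> S"
  shows "ideal S type_ring"
proof -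
  interpret cring "type_ring :: 'a ring" by (rule cring_tr)
  show ?thesis
  proof (rule idealI)
    show "ring (type_ring :: 'a ring)" by (rule cring.axioms(1)[OF cring_tr])
    show "subgroup S (add_monoid (type_ring :: 'a ring))"
      by (rule add.subgroupI) (use assms in \<open>auto simp: tr_neg\<close>)
  qed (use assms in \<open>auto simp: mult.commute\<close>)
qed

lemma idl_repr:
  assumes "finite G" "(c::'a::comm_ring_1) \<in> Idl\<^bsub>type_ring\<^esub> G"
  shows "\<exists>f. c = (\<Sum>g\<in>G. f g * g)"
proof -
  interpret cring "type_ring :: 'a ring" by (rule cring_tr)
  define S where "S = {x. \<exists>f. x = (\<Sum>g\<in>G. f g * g)}"
  have "ideal S type_ring"
  proof (rule ideal_tr)
    show "0 \<in> S" unfolding S_def by (auto intro!: exI[of _ "\<lambda>_. 0"])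
    show "x + y \<in> S" if xy: "x \<in> S" "y \<in> S" for x y
    proof -
      obtain f1 f2 where "x = (\<Sum>g\<in>G. f1 g * g)" "y = (\<Sum>g\<in>G. f2 g * g)" using xy S_def by auto
      thus ?thesis unfolding S_def by (auto intro!: exI[of _ "\<lambda>g. f1 g + f2 g"] simp: sum.distrib distrib_right)
    qed
    show "- x \<in> S" if xy: "x \<in> S" for x
    proof -
      obtain f1 where "x = (\<Sum>g\<in>G. f1 g * g)" using xy S_def by auto
      thus ?thesis unfolding S_def by (auto intro!: exI[of _ "\<lambda>g. - f1 g"] simp: sum_negf)
    qed
    show "s * x \<in> S" if xy: "x \<in> S" for s x
    proof -
      obtain f1 where "x = (\<Sum>g\<in>G. f1 g * g)" using xy S_def by auto
      thus ?thesis unfolding S_def by (auto intro!: exI[of _ "\<lambda>g. s * f1 g"] simp: sum_distrib_left mult.assoc)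
    qed
  qed
  moreover have "G \<subseteq> S"
  proof
    fix g0 assume "g0 \<in> G"
    have "(\<Sum>g\<in>G. (if g = g0 then 1 else 0) * g) = (\<Sum>g\<in>G. if g = g0 then g else 0)" by (rule sum.cong) auto
    also have "\<dots> = g0" using \<open>g0 \<in> G\<close> assms(1) by (simp add: sum.delta')
    finally have "g0 = (\<Sum>g\<in>G. (if g = g0 then 1 else 0) * g)" by simp
    thus "g0 \<in> S" unfolding S_def mem_Collect_eq by (rule exI[of _ "\<lambda>g. if g = g0 then 1 else 0"])
  qed
  ultimately have "Idl\<^bsub>type_ring\<^esub> G \<subseteq> S" by (rule genideal_minimal)
  thus ?thesis using assms(2) S_def by auto
qed

lemma noeth_stab:
  fixes L :: "nat \<Rightarrow> 'a set"
  assumes "noetherian_ring R" "\<And>j. ideal (L j) R" "\<And>j k. j \<le> k \<Longrightarrow> L j \<subseteq> L k"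
  shows "\<exists>D. \<forall>d. L d \<subseteq> L D"
proof -
  interpret noetherian_ring R by fact
  have ch: "subset.chain {I. ideal I R} (range L)"
  proof -
    have "x \<subseteq> y \<or> y \<subseteq> x" if xy: "x \<in> range L" "y \<in> range L" for x y
    proof -
      obtain j k where "x = L j" "y = L k" using xy by blast
      thus ?thesis using assms(3)[of j k] assms(3)[of k j] nat_le_linear[of j k] by blast
    qed
    thus ?thesis unfolding pred_on.chain_def using assms(2) by auto
  qed
  have "\<Union>(range L) \<in> range L" by (rule ideal_chain_is_trivial) (use ch in auto)
  then obtain D where "\<Union>(range L) = L D" by auto
  thus ?thesis by blast
qed

definition sc :: "'a::comm_ring_1 \<Rightarrow> nat \<Rightarrow> 'a" where "sc s = (\<lambda>n. if n = 0 then s else 0)"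
definition e1 :: "'a::comm_ring_1 \<Rightarrow> nat \<Rightarrow> 'a" where "e1 s = (\<lambda>n. if n = 1 then s else 0)"

lemma sc_mult: "sha_mult lam (sc s) a = (\<lambda>n. s * a n)"
proof
  fix p
  have "sha_mult lam a (sc s) p = (\<Sum>n\<in>{0}. \<Sum>k\<le>n. of_nat (p choose n) * of_nat (n choose k) * lam ^ k * a (p - n + k) * sc s n)"
    unfolding sha_mult_def by (rule sum.mono_neutral_right) (auto simp: sc_def)
  moreover have "sha_mult lam (sc s) a p = sha_mult lam a (sc s) p" by (simp add: sha_comm[of lam "sc s" a])
  ultimately show "sha_mult lam (sc s) a p = s * a p" by (simp add: sc_def mult.commute)
qed

lemma Q_inv: "is_Q_algebra TYPE('a::comm_ring_1) \<Longrightarrow> \<exists>u::'a. of_nat (Suc d) * u = 1"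
  unfolding is_Q_algebra_def by (metis dvd_def zero_less_Suc)

definition LC :: "(nat \<Rightarrow> 'a::comm_ring_1) set \<Rightarrow> nat \<Rightarrow> 'a set" where
  "LC J d = {c. \<exists>a\<in>J. bnd d a \<and> a d = c}"

lemma ring_tr: "ring (type_ring :: 'a::comm_ring_1 ring)"
  by (rule cring.axioms(1)[OF cring_tr])

lemma LC_ideal:
  assumes R: "shaR lam R" and J: "ideal J R" and sc: "\<And>s. sc s \<in> carrier R"
  shows "ideal (LC J d) type_ring"
proof (rule ideal_tr)
  show "0 \<in> LC J d" unfolding LC_def using ideal_zero[OF R J] by (force simp: bnd_def)
  show "x + y \<in> LC J d" if xy: "x \<in> LC J d" "y \<in> LC J d" for x y
  proof -
    obtain a b where "a \<in> J" "bnd d a" "a d = x" "b \<in> J" "bnd d b" "b d = y" using xy unfolding LC_def by blast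
    thus ?thesis unfolding LC_def using ideal_add[OF R J, of a b]
      by (intro CollectI bexI[of _ "\<lambda>n. a n + b n"]) (auto simp: bnd_def)
  qed
  show "- x \<in> LC J d" if xy: "x \<in> LC J d" for x
  proof -
    obtain a where "a \<in> J" "bnd d a" "a d = x" using xy unfolding LC_def by blast
    thus ?thesis unfolding LC_def using ideal_neg[OF R J, of a]
      by (intro CollectI bexI[of _ "\<lambda>n. - a n"]) (auto simp: bnd_def)
  qed
  show "s * x \<in> LC J d" if xy: "x \<in> LC J d" for s x
  proof -
    obtain a where "a \<in> J" "bnd d a" "a d = x" using xy unfolding LC_def by blast
    moreover have "sha_mult lam (sc s) a \<in> J" by (rule ideal_lmult[OF R J sc \<open>a \<in> J\<close>])
    ultimately show ?thesis unfolding LC_def sc_mult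
      by (intro CollectI bexI[of _ "\<lambda>n. s * a n"]) (auto simp: bnd_def)
  qed
qed

lemma LC_up:
  assumes R: "shaR lam R" and J: "ideal J R" and Q: "is_Q_algebra TYPE('a::comm_ring_1)"
    and e1: "\<And>u::'a. e1 u \<in> carrier R" and c: "(c::'a) \<in> LC J d"
  shows "c \<in> LC J (Suc d)"
proof -
  obtain a where a: "a \<in> J" "bnd d a" "a d = c" using c unfolding LC_def by blast
  obtain u :: 'a where u: "of_nat (Suc d) * u = 1" using Q_inv[OF Q] by blast
  define b where "b = sha_mult lam (e1 u) a"
  have "b \<in> J" unfolding b_def by (rule ideal_lmult[OF R J e1 a(1)])
  have b1: "bnd 1 (e1 u)" by (simp add: bnd_def e1_def)
  have "bnd (1 + d) b" unfolding b_def by (rule mult_bnd(1)[OF b1 a(2)])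
  moreover have "b (1 + d) = of_nat ((1 + d) choose d) * e1 u 1 * a d"
    unfolding b_def by (rule mult_bnd(2)[OF b1 a(2)])
  hence "b (Suc d) = c" using u a(3) by (simp add: e1_def)
  ultimately show ?thesis unfolding LC_def using \<open>b \<in> J\<close> by auto
qed

lemma LC_mono:
  assumes R: "shaR lam R" and J: "ideal J R" and Q: "is_Q_algebra TYPE('a::comm_ring_1)"
    and e1: "\<And>u::'a. e1 u \<in> carrier R" and le: "d \<le> d'"
  shows "LC J d \<subseteq> LC J d'"
  using le
proof (induction d' rule: dec_induct)
  case base thus ?case by simp
next
  case (step m) thus ?case using LC_up[OF R J Q e1] by blast
qed

lemma part1:
  fixes lam :: "'a::comm_ring_1"
  assumes Q: "is_Q_algebra TYPE('a)" and N: "noetherian_ring (type_ring :: 'a ring)"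
  shows "noetherian_ring (sha_ring lam)"
proof -
  let ?R = "sha_ring lam"
  have R: "shaR lam ?R" by (rule shaR_sha)
  have cR: "cring ?R" by (rule cring_sha)
  have rR: "ring ?R" using cR by (rule cring.axioms(1))
  have carr: "carrier ?R = {a. finite {n. a n \<noteq> 0}}" by (simp add: sha_ring_def)
  have sc: "sc s \<in> carrier ?R" for s :: 'a
    unfolding carr by (rule CollectI, rule finite_subset[of _ "{0}"]) (auto simp: sc_def)
  have e1: "e1 u \<in> carrier ?R" for u :: 'a
    unfolding carr by (rule CollectI, rule finite_subset[of _ "{1}"]) (auto simp: e1_def)
  show ?thesis
  proof (rule ring.noetherian_ringI[OF rR])
    fix I assume I: "ideal I ?R"
    define L where "L d = LC I d" for d
    have Lid: "ideal (L d) type_ring" for d unfolding L_def by (rule LC_ideal[OF R I sc])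
    have Lmono: "L d \<subseteq> L d'" if "d \<le> d'" for d d' unfolding L_def by (rule LC_mono[OF R I Q e1 that])
    obtain D where D: "\<And>d. L d \<subseteq> L D" using noeth_stab[where L=L, OF N Lid Lmono] by blast
    have "\<forall>d. \<exists>G. finite G \<and> L d = Idl\<^bsub>type_ring\<^esub> G"
      using noetherian_ring.finetely_gen[OF N Lid] by blast
    then obtain G where G: "\<And>d. finite (G d)" "\<And>d. L d = Idl\<^bsub>type_ring\<^esub> (G d)" by metis
    have "G d \<subseteq> L d" for d using G(2)[of d] ring.genideal_self[OF ring_tr, of "G d"] by simp
    hence "\<forall>d g. g \<in> G d \<longrightarrow> (\<exists>w. w \<in> I \<and> bnd d w \<and> w d = g)" unfolding L_def LC_def by blast
    then obtain w where w: "\<And>d g. g \<in> G d \<Longrightarrow> w d g \<in> I \<and> bnd d (w d g) \<and> w d g d = g" by metis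
    define A where "A = (\<Union>d\<in>{..D}. w d ` G d)"
    have AI: "A \<subseteq> I" unfolding A_def using w by auto
    have Icarr: "I \<subseteq> carrier ?R" using ideal_carrier[OF I] by blast
    have Afin: "finite A" unfolding A_def using G(1) by auto
    define K where "K = Idl\<^bsub>?R\<^esub> A"
    have K: "ideal K ?R" unfolding K_def by (rule ring.genideal_ideal[OF rR]) (use AI Icarr in auto)
    have KI: "K \<subseteq> I" unfolding K_def by (rule ring.genideal_minimal[OF rR I AI])
    have AK: "A \<subseteq> K" unfolding K_def by (rule ring.genideal_self[OF rR]) (use AI Icarr in auto)
    have LK0: "L d \<subseteq> LC K d" if "d \<le> D" for d
    proof -
      have "G d \<subseteq> LC K d"
      proof
        fix g assume g: "g \<in> G d"
        hence "w d g \<in> K" using AK that unfolding A_def by blast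
        thus "g \<in> LC K d" using w[OF g] unfolding LC_def by blast
      qed
      hence "Idl\<^bsub>type_ring\<^esub> (G d) \<subseteq> LC K d"
        by (rule ring.genideal_minimal[OF ring_tr LC_ideal[OF R K sc]])
      thus ?thesis using G(2) by simp
    qed
    have LK: "L d \<subseteq> LC K d" for d
    proof (cases "d \<le> D")
      case True thus ?thesis by (rule LK0)
    next
      case False
      have "L d \<subseteq> L D" by (rule D)
      also have "\<dots> \<subseteq> LC K D" by (rule LK0) simp
      also have "\<dots> \<subseteq> LC K d" by (rule LC_mono[OF R K Q e1]) (use False in simp)
      finally show ?thesis .
    qed
    have main: "\<forall>a. a \<in> I \<longrightarrow> bnd d a \<longrightarrow> a \<in> K" for d
    proof (induction d)
      case 0
      show ?case
      proof (intro allI impI)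
        fix a assume a: "a \<in> I" "bnd 0 a"
        hence "a 0 \<in> L 0" unfolding L_def LC_def by blast
        then obtain k where k: "k \<in> K" "bnd 0 k" "k 0 = a 0" using LK[of 0] unfolding LC_def by blast
        have "k = a"
        proof
          fix n show "k n = a n" using k a by (cases n) (auto simp: bnd_def)
        qed
        thus "a \<in> K" using k by simp
      qed
    next
      case (Suc d)
      show ?case
      proof (intro allI impI)
        fix a assume a: "a \<in> I" "bnd (Suc d) a"
        hence "a (Suc d) \<in> L (Suc d)" unfolding L_def LC_def by blast
        then obtain k where k: "k \<in> K" "bnd (Suc d) k" "k (Suc d) = a (Suc d)" using LK[of "Suc d"] unfolding LC_def by blast
        have "(\<lambda>n. a n - k n) \<in> I" using ideal_diff[OF R I a(1)] k(1) KI by blast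
        moreover have "bnd d (\<lambda>n. a n - k n)"
          unfolding bnd_def
        proof (intro allI impI)
          fix i assume "d < i"
          thus "a i - k i = 0" using a(2) k(2,3) unfolding bnd_def by (cases "i = Suc d") auto
        qed
        ultimately have "(\<lambda>n. a n - k n) \<in> K" using Suc.IH by blast
        hence "(\<lambda>n. (a n - k n) + k n) \<in> K" using ideal_add[OF R K _ k(1)] by blast
        thus "a \<in> K" by simp
      qed
    qed
    have "I = K"
    proof
      show "K \<subseteq> I" by (rule KI)
      show "I \<subseteq> K"
      proof
        fix a assume a: "a \<in> I"
        hence "finite {n. a n \<noteq> 0}" using Icarr carr by auto
        then obtain d where "bnd d a" using fin_supp_iff by blast
        thus "a \<in> K" using main a by blast
      qed
    qed
    thus "\<exists>A\<subseteq>carrier ?R. finite A \<and> I = Idl\<^bsub>?R\<^esub> A"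
      using AI Icarr Afin K_def by blast
  qed
qed

definition LO :: "(nat \<Rightarrow> 'a::comm_ring_1) set \<Rightarrow> nat \<Rightarrow> 'a set" where
  "LO J d = {c. \<exists>a\<in>J. low d a \<and> a d = c}"

lemma LO_ideal:
  assumes R: "shaR lam R" and J: "ideal J R" and sc: "\<And>s. sc s \<in> carrier R"
  shows "ideal (LO J d) type_ring"
proof (rule ideal_tr)
  show "0 \<in> LO J d" unfolding LO_def using ideal_zero[OF R J] by (force simp: low_def)
  show "x + y \<in> LO J d" if xy: "x \<in> LO J d" "y \<in> LO J d" for x y
  proof -
    obtain a b where "a \<in> J" "low d a" "a d = x" "b \<in> J" "low d b" "b d = y" using xy unfolding LO_def by blast
    thus ?thesis unfolding LO_def using ideal_add[OF R J, of a b]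
      by (intro CollectI bexI[of _ "\<lambda>n. a n + b n"]) (auto simp: low_def)
  qed
  show "- x \<in> LO J d" if xy: "x \<in> LO J d" for x
  proof -
    obtain a where "a \<in> J" "low d a" "a d = x" using xy unfolding LO_def by blast
    thus ?thesis unfolding LO_def using ideal_neg[OF R J, of a]
      by (intro CollectI bexI[of _ "\<lambda>n. - a n"]) (auto simp: low_def)
  qed
  show "s * x \<in> LO J d" if xy: "x \<in> LO J d" for s x
  proof -
    obtain a where "a \<in> J" "low d a" "a d = x" using xy unfolding LO_def by blast
    moreover have "sha_mult lam (sc s) a \<in> J" by (rule ideal_lmult[OF R J sc \<open>a \<in> J\<close>])
    ultimately show ?thesis unfolding LO_def sc_mult
      by (intro CollectI bexI[of _ "\<lambda>n. s * a n"]) (auto simp: low_def)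
  qed
qed

lemma LO_up:
  assumes R: "shaR 0 R" and J: "ideal J R" and Q: "is_Q_algebra TYPE('a::comm_ring_1)"
    and e1: "\<And>u::'a. e1 u \<in> carrier R" and c: "(c::'a) \<in> LO J d"
  shows "c \<in> LO J (Suc d)"
proof -
  obtain a where a: "a \<in> J" "low d a" "a d = c" using c unfolding LO_def by blast
  obtain u :: 'a where u: "of_nat (Suc d) * u = 1" using Q_inv[OF Q] by blast
  define b where "b = sha_mult 0 (e1 u) a"
  have "b \<in> J" unfolding b_def by (rule ideal_lmult[OF R J e1 a(1)])
  have b1: "low 1 (e1 u)" by (simp add: low_def e1_def)
  have "low (1 + d) b" unfolding b_def by (rule mult_low(1)[OF b1 a(2)])
  moreover have "b (1 + d) = of_nat ((1 + d) choose d) * e1 u 1 * a d"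
    unfolding b_def by (rule mult_low(2)[OF b1 a(2)])
  hence "b (Suc d) = c" using u a(3) by (simp add: e1_def)
  ultimately show ?thesis unfolding LO_def using \<open>b \<in> J\<close> by auto
qed

lemma LO_mono:
  assumes R: "shaR 0 R" and J: "ideal J R" and Q: "is_Q_algebra TYPE('a::comm_ring_1)"
    and e1: "\<And>u::'a. e1 u \<in> carrier R" and le: "d \<le> d'"
  shows "LO J d \<subseteq> LO J d'"
  using le
proof (induction d' rule: dec_induct)
  case base thus ?case by simp
next
  case (step m) thus ?case using LO_up[OF R J Q e1] by blast
qed

lemma Q_inv_pos: "is_Q_algebra TYPE('a::comm_ring_1) \<Longrightarrow> n > 0 \<Longrightarrow> \<exists>u::'a. of_nat n * u = 1"
  unfolding is_Q_algebra_def by (metis dvd_def)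

lemma trunc_lin:
  "sha_mult 0 X Y p = (\<Sum>s<Suc p. sha_mult 0 (\<lambda>n. if n = s then X s else 0) Y p)"
proof -
  have "(\<Sum>s<Suc p. sha_mult 0 (\<lambda>n. if n = s then X s else 0) Y p) =
        (\<Sum>s\<le>p. \<Sum>n\<le>p. if s = p - n then of_nat (p choose n) * X (p - n) * Y n else 0)"
    unfolding sha_mult0 lessThan_Suc_atMost by (intro sum.cong refl) auto
  also have "\<dots> = (\<Sum>n\<le>p. \<Sum>s\<le>p. if s = p - n then of_nat (p choose n) * X (p - n) * Y n else 0)"
    by (rule sum.swap)
  also have "\<dots> = (\<Sum>n\<le>p. of_nat (p choose n) * X (p - n) * Y n)"
    by (intro sum.cong refl) (simp add: sum.delta)
  finally show ?thesis by (simp add: sha_mult0)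
qed

lemma part2:
  fixes lam :: "'a::comm_ring_1"
  assumes Q: "is_Q_algebra TYPE('a)" and N: "noetherian_ring (type_ring :: 'a ring)" and l0: "lam = 0"
  shows "noetherian_ring (sha_hat_ring lam)"
proof -
  let ?R = "sha_hat_ring (0::'a)"
  have R: "shaR 0 ?R" by (rule shaR_hat)
  have cR: "cring ?R" by (rule cring_hat)
  have rR: "ring ?R" using cR by (rule cring.axioms(1))
  have carr: "carrier ?R = UNIV" by (simp add: sha_hat_ring_def)
  have sc: "sc s \<in> carrier ?R" for s :: 'a by (simp add: carr)
  have e1: "e1 u \<in> carrier ?R" for u :: 'a by (simp add: carr)
  have "noetherian_ring ?R"
  proof (rule ring.noetherian_ringI[OF rR])
    fix I assume I: "ideal I ?R"
    define L where "L d = LO I d" for d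
    have Lid: "ideal (L d) type_ring" for d unfolding L_def by (rule LO_ideal[OF R I sc])
    have Lmono: "L d \<subseteq> L d'" if "d \<le> d'" for d d' unfolding L_def by (rule LO_mono[OF R I Q e1 that])
    obtain D where D: "\<And>d. L d \<subseteq> L D" using noeth_stab[where L=L, OF N Lid Lmono] by blast
    have "\<forall>d. \<exists>G. finite G \<and> L d = Idl\<^bsub>type_ring\<^esub> G"
      using noetherian_ring.finetely_gen[OF N Lid] by blast
    then obtain G where G: "\<And>d. finite (G d)" "\<And>d. L d = Idl\<^bsub>type_ring\<^esub> (G d)" by metis
    have "G d \<subseteq> L d" for d using G(2)[of d] ring.genideal_self[OF ring_tr, of "G d"] by simp
    hence "\<forall>d g. g \<in> G d \<longrightarrow> (\<exists>w. w \<in> I \<and> low d w \<and> w d = g)" unfolding L_def LO_def by blast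
    then obtain w where w: "\<And>d g. g \<in> G d \<Longrightarrow> w d g \<in> I \<and> low d (w d g) \<and> w d g d = g" by metis
    define A where "A = (\<Union>d\<in>{..D}. w d ` G d)"
    have AI: "A \<subseteq> I" unfolding A_def using w by auto
    have Icarr: "I \<subseteq> carrier ?R" using ideal_carrier[OF I] by blast
    have Afin: "finite A" unfolding A_def using G(1) by auto
    define K where "K = Idl\<^bsub>?R\<^esub> A"
    have K: "ideal K ?R" unfolding K_def by (rule ring.genideal_ideal[OF rR]) (use AI Icarr in auto)
    have KI: "K \<subseteq> I" unfolding K_def by (rule ring.genideal_minimal[OF rR I AI])
    have AK: "A \<subseteq> K" unfolding K_def by (rule ring.genideal_self[OF rR]) (use AI Icarr in auto)
    have LK0: "L d \<subseteq> LO K d" if "d \<le> D" for d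
    proof -
      have "G d \<subseteq> LO K d"
      proof
        fix g assume g: "g \<in> G d"
        hence "w d g \<in> K" using AK that unfolding A_def by blast
        thus "g \<in> LO K d" using w[OF g] unfolding LO_def by blast
      qed
      hence "Idl\<^bsub>type_ring\<^esub> (G d) \<subseteq> LO K d"
        by (rule ring.genideal_minimal[OF ring_tr LO_ideal[OF R K sc]])
      thus ?thesis using G(2) by simp
    qed
    define GD where "GD = G D"
    have GDfin: "finite GD" unfolding GD_def by (rule G(1))
    have wGD: "w D g \<in> I" "low D (w D g)" "w D g D = g" "w D g \<in> K" if "g \<in> GD" for g
      using w[of g D] that AK unfolding GD_def A_def by auto
    have vex: "\<exists>v::'a. of_nat ((t + D) choose D) * v = 1" for t
      by (rule Q_inv_pos[OF Q]) simp
    define v where "v t = (SOME v::'a. of_nat ((t + D) choose D) * v = 1)" for t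
    have v: "of_nat ((t + D) choose D) * v t = 1" for t
      unfolding v_def by (rule someI_ex[OF vex])
    define cf where "cf t r = (SOME f. r (t + D) = (\<Sum>g\<in>GD. f g * g))" for t and r :: "nat \<Rightarrow> 'a"
    define ht where "ht t r g = (\<lambda>n. if n = t then cf t r g * v t else 0)" for t r g
    define step where "step t r = (\<lambda>n. r n - (\<Sum>g\<in>GD. sha_mult 0 (ht t r g) (w D g) n))" for t r
    have tail: "b \<in> K" if b: "b \<in> I" "low D b" for b
    proof -
      define rs where "rs = rec_nat b step"
      have rs0: "rs 0 = b" and rsS: "rs (Suc t) = step t (rs t)" for t
        by (simp_all add: rs_def)
      have inv: "rs t \<in> I \<and> low (t + D) (rs t)" for t
      proof (induction t)
        case 0 thus ?case using b by (simp add: rs0)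
      next
        case (Suc t)
        let ?r = "rs t"
        have r: "?r \<in> I" "low (t + D) ?r" using Suc.IH by auto
        have "?r (t + D) \<in> L (t + D)" unfolding L_def LO_def using r by blast
        hence "?r (t + D) \<in> Idl\<^bsub>type_ring\<^esub> GD" using D[of "t + D"] G(2)[of D] GD_def by auto
        hence "\<exists>f. ?r (t + D) = (\<Sum>g\<in>GD. f g * g)" by (rule idl_repr[OF GDfin])
        hence cfr: "?r (t + D) = (\<Sum>g\<in>GD. cf t ?r g * g)" unfolding cf_def by (rule someI_ex)
        have lowh: "low t (ht t ?r g)" for g by (simp add: ht_def low_def)
        have prod_low: "low (t + D) (sha_mult 0 (ht t ?r g) (w D g))" if "g \<in> GD" for g
          by (rule mult_low(1)[OF lowh wGD(2)[OF that]])
        have prod_top: "sha_mult 0 (ht t ?r g) (w D g) (t + D) = cf t ?r g * g" if "g \<in> GD" for g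
        proof -
          have "sha_mult 0 (ht t ?r g) (w D g) (t + D) = of_nat ((t + D) choose D) * ht t ?r g t * w D g D"
            by (rule mult_low(2)[OF lowh wGD(2)[OF that]])
          also have "\<dots> = (of_nat ((t + D) choose D) * v t) * cf t ?r g * g"
            using wGD(3)[OF that] by (simp add: ht_def mult_ac)
          finally show ?thesis using v[of t] by simp
        qed
        have "rs (Suc t) \<in> I"
          unfolding rsS step_def
          by (rule ideal_diff[OF R I r(1)], rule ideal_sum[OF R I GDfin])
             (rule ideal_lmult[OF R I], simp add: carr, rule wGD(1))
        moreover have "low (Suc t + D) (rs (Suc t))"
          unfolding low_def rsS step_def
        proof (intro allI impI)
          fix i assume i: "i < Suc t + D"
          show "?r i - (\<Sum>g\<in>GD. sha_mult 0 (ht t ?r g) (w D g) i) = 0"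
          proof (cases "i < t + D")
            case True
            thus ?thesis using r(2) prod_low unfolding low_def by simp
          next
            case False
            hence "i = t + D" using i by simp
            thus ?thesis using cfr prod_top by simp
          qed
        qed
        ultimately show ?case by simp
      qed
      define H where "H g = (\<lambda>n. cf n (rs n) g * v n)" for g
      have hH: "(\<lambda>n. if n = s then H g s else 0) = ht s (rs s) g" for s g
        unfolding H_def ht_def by simp
      have rs_expl: "rs t = (\<lambda>n. b n - (\<Sum>s<t. \<Sum>g\<in>GD. sha_mult 0 (ht s (rs s) g) (w D g) n))" for t
      proof (induction t)
        case 0 thus ?case by (simp add: rs0)
      next
        case (Suc t)
        show ?case by (subst rsS, subst step_def, subst Suc.IH) (simp add: algebra_simps)
      qed
      have "b = (\<lambda>n. \<Sum>g\<in>GD. sha_mult 0 (H g) (w D g) n)"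
      proof
        fix p
        have "(\<Sum>g\<in>GD. sha_mult 0 (H g) (w D g) p) = (\<Sum>g\<in>GD. \<Sum>s<Suc p. sha_mult 0 (ht s (rs s) g) (w D g) p)"
          by (subst trunc_lin) (simp add: hH)
        also have "\<dots> = (\<Sum>s<Suc p. \<Sum>g\<in>GD. sha_mult 0 (ht s (rs s) g) (w D g) p)"
          by (rule sum.swap)
        also have "\<dots> = b p - rs (Suc p) p"
          by (subst rs_expl) simp
        also have "rs (Suc p) p = 0" using inv[of "Suc p"] by (simp add: low_def)
        finally show "b p = (\<Sum>g\<in>GD. sha_mult 0 (H g) (w D g) p)" by simp
      qed
      also have "\<dots> \<in> K"
        by (rule ideal_sum[OF R K GDfin], rule ideal_lmult[OF R K], simp add: carr, rule wGD(4))
      finally show ?thesis .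
    qed
    have down: "\<forall>a. a \<in> I \<longrightarrow> low (D - m) a \<longrightarrow> a \<in> K" for m
    proof (induction m)
      case 0 thus ?case using tail by simp
    next
      case (Suc m)
      show ?case
      proof (intro allI impI)
        fix a assume a: "a \<in> I" "low (D - Suc m) a"
        show "a \<in> K"
        proof (cases "D - Suc m = D - m")
          case True thus ?thesis using Suc.IH a by simp
        next
          case False
          define d where "d = D - Suc m"
          have dD: "d \<le> D" "Suc d = D - m" using False by (auto simp: d_def)
          have "a d \<in> L d" unfolding L_def LO_def using a d_def by blast
          then obtain k where k: "k \<in> K" "low d k" "k d = a d" using LK0[OF dD(1)] unfolding LO_def by blast
          have "(\<lambda>n. a n - k n) \<in> I" using ideal_diff[OF R I a(1)] k(1) KI by blast
          moreover have "low (D - m) (\<lambda>n. a n - k n)"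
            unfolding low_def
          proof (intro allI impI)
            fix i assume "i < D - m"
            hence "i < d \<or> i = d" using dD by auto
            thus "a i - k i = 0" using a(2) k(2,3) unfolding low_def d_def by auto
          qed
          ultimately have "(\<lambda>n. a n - k n) \<in> K" using Suc.IH by blast
          hence "(\<lambda>n. (a n - k n) + k n) \<in> K" using ideal_add[OF R K _ k(1)] by blast
          thus "a \<in> K" by simp
        qed
      qed
    qed
    have "I = K"
    proof
      show "K \<subseteq> I" by (rule KI)
      show "I \<subseteq> K"
      proof
        fix a assume a: "a \<in> I"
        have "low (D - D) a" by (simp add: low_def)
        thus "a \<in> K" using down[of D] a by blast
      qed
    qed
    thus "\<exists>A\<subseteq>carrier ?R. finite A \<and> I = Idl\<^bsub>?R\<^esub> A"
      using AI Icarr Afin K_def by blast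
  qed
  thus ?thesis using l0 by simp
qed

theorem theorem3p1:
  fixes lam :: "'a::comm_ring_1"
  shows "(is_Q_algebra TYPE('a) \<and> noetherian_ring (type_ring :: 'a ring)
            \<longrightarrow> noetherian_ring (sha_ring lam))
       \<and> (is_Q_algebra TYPE('a) \<and> noetherian_ring (type_ring :: 'a ring) \<and> lam = 0
            \<longrightarrow> noetherian_ring (sha_hat_ring lam))
       \<and> (is_Q_algebra TYPE('a) \<and> (\<forall>x. lam * x = 0 \<longrightarrow> x = 0)
            \<and> (\<exists>x. x \<noteq> 0 \<and> (\<forall>n::nat. lam ^ n dvd x))
            \<longrightarrow> \<not> noetherian_ring (sha_hat_ring lam))
       \<and> (\<not> is_Q_algebra TYPE('a)
            \<longrightarrow> \<not> noetherian_ring (sha_ring lam) \<and> \<not> noetherian_ring (sha_hat_ring lam))"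
proof (intro conjI impI)
  assume "is_Q_algebra TYPE('a) \<and> noetherian_ring (type_ring :: 'a ring)"
  thus "noetherian_ring (sha_ring lam)" using part1 by blast
next
  assume "is_Q_algebra TYPE('a) \<and> noetherian_ring (type_ring :: 'a ring) \<and> lam = 0"
  thus "noetherian_ring (sha_hat_ring lam)" using part2 by blast
next
  assume H: "is_Q_algebra TYPE('a) \<and> (\<forall>x. lam * x = 0 \<longrightarrow> x = 0)
            \<and> (\<exists>x. x \<noteq> 0 \<and> (\<forall>n::nat. lam ^ n dvd x))"
  then obtain x where x: "x \<noteq> 0" "\<forall>n::nat. lam ^ n dvd x" by blast
  show "\<not> noetherian_ring (sha_hat_ring lam)"
    by (rule part3_generic[OF x cring_hat]) (simp_all add: sha_hat_ring_def)
next
  assume nQ: "\<not> is_Q_algebra TYPE('a)"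
  have e: "(\<lambda>n. if n = q then 1 else (0::'a)) \<in> carrier (sha_ring lam)" for q
    by (simp add: sha_ring_def)
  show "\<not> noetherian_ring (sha_ring lam)"
    by (rule part4_generic[OF nQ cring_sha]) (simp_all add: sha_ring_def)
  show "\<not> noetherian_ring (sha_hat_ring lam)"
    by (rule part4_generic[OF nQ cring_hat]) (simp_all add: sha_hat_ring_def)
qed

end
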